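(* Consider the system (with $c,k,b,s,\nu>0$, $h\in\mathbb{R}$) $$\frac{df}{dt}=w(f)(1-f)f-\nu f-h(1-2x),\qquad \frac{dx}{dt}=s\,x(1-x)(1-2f),\qquad w(f)=\frac{c}{1+e^{-k\frac{f}{1-f}+b}}.$$ The system undergoes a transcritical bifurcation at $(f^*,x^* )=(1/2,1)$, at the parameter value $$h^{**}=-\frac{c}{4(1+e^{b-k})}+\frac{\nu}{2},$$ where the branch of fixed points with $x=1$ (given by $h=-w(f)(1-f)f+\nu f$) intersects the branch of fixed points with $f=1/2$ (given, for $h\ne0$, by $x=\tfrac12\left(1+\tfrac{h^{**}}{h}\right)$). If $\lambda_1:=\dfrac{c k e^{b-k}}{(1+e^{b-k})^2}-\nu<0$ and $h^{**}>0$, then the two branches $x=1$ and $f=1/2$ exchange stability at this bifurcation point.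
   Context: The Jacobian of the system is $$J=\begin{pmatrix} w'(f)(f-f^2)+w(f)(1-2f)-\nu & 2h\\ -2s\,x(1-x) & s(1-2x)(1-2f)\end{pmatrix}.$$ A fixed point is stable if all eigenvalues of $J$ have negative real part and unstable if some eigenvalue has positive real part. *)

theory Defs
  imports "HOL-Analysis.Analysis"
begin

definition wfit :: "real \<Rightarrow> real \<Rightarrow> real \<Rightarrow> real \<Rightarrow> real" where
  "wfit c k b f = c / (1 + exp (- k * (f / (1 - f)) + b))"

definition rhs_f :: "real \<Rightarrow> real \<Rightarrow> real \<Rightarrow> real \<Rightarrow> real \<Rightarrow> real \<Rightarrow> real \<Rightarrow> real" where
  "rhs_f c k b \<nu> h f x = wfit c k b f * (1 - f) * f - \<nu> * f - h * (1 - 2 * x)"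

definition rhs_x :: "real \<Rightarrow> real \<Rightarrow> real \<Rightarrow> real" where
  "rhs_x s f x = s * x * (1 - x) * (1 - 2 * f)"

definition fixed_point :: "real \<Rightarrow> real \<Rightarrow> real \<Rightarrow> real \<Rightarrow> real \<Rightarrow> real \<Rightarrow> real \<Rightarrow> real \<Rightarrow> bool" where
  "fixed_point c k b s \<nu> h f x \<longleftrightarrow> rhs_f c k b \<nu> h f x = 0 \<and> rhs_x s f x = 0"

definition J11 :: "real \<Rightarrow> real \<Rightarrow> real \<Rightarrow> real \<Rightarrow> real \<Rightarrow> real" where
  "J11 c k b \<nu> f = deriv (wfit c k b) f * (f - f^2) + wfit c k b f * (1 - 2 * f) - \<nu>"

definition J12 :: "real \<Rightarrow> real" where
  "J12 h = 2 * h"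

definition J21 :: "real \<Rightarrow> real \<Rightarrow> real" where
  "J21 s x = - 2 * s * x * (1 - x)"

definition J22 :: "real \<Rightarrow> real \<Rightarrow> real \<Rightarrow> real" where
  "J22 s f x = s * (1 - 2 * x) * (1 - 2 * f)"

definition jac_eigenvalue :: "real \<Rightarrow> real \<Rightarrow> real \<Rightarrow> real \<Rightarrow> real \<Rightarrow> real \<Rightarrow> real \<Rightarrow> real \<Rightarrow> complex \<Rightarrow> bool" where
  "jac_eigenvalue c k b s \<nu> h f x z \<longleftrightarrow>
     (complex_of_real (J11 c k b \<nu> f) - z) * (complex_of_real (J22 s f x) - z)
       - complex_of_real (J12 h) * complex_of_real (J21 s x) = 0"

definition stable_fp :: "real \<Rightarrow> real \<Rightarrow> real \<Rightarrow> real \<Rightarrow> real \<Rightarrow> real \<Rightarrow> real \<Rightarrow> real \<Rightarrow> bool" where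
  "stable_fp c k b s \<nu> h f x \<longleftrightarrow> (\<forall>z. jac_eigenvalue c k b s \<nu> h f x z \<longrightarrow> Re z < 0)"

definition unstable_fp :: "real \<Rightarrow> real \<Rightarrow> real \<Rightarrow> real \<Rightarrow> real \<Rightarrow> real \<Rightarrow> real \<Rightarrow> real \<Rightarrow> bool" where
  "unstable_fp c k b s \<nu> h f x \<longleftrightarrow> (\<exists>z. jac_eigenvalue c k b s \<nu> h f x z \<and> Re z > 0)"

definition hss :: "real \<Rightarrow> real \<Rightarrow> real \<Rightarrow> real \<Rightarrow> real" where
  "hss c k b \<nu> = - c / (4 * (1 + exp (b - k))) + \<nu> / 2"

definition lambda1 :: "real \<Rightarrow> real \<Rightarrow> real \<Rightarrow> real \<Rightarrow> real" where
  "lambda1 c k b \<nu> = c * k * exp (b - k) / (1 + exp (b - k))^2 - \<nu>"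

end

theory Submission
  imports Defs
begin

definition wD :: "real \<Rightarrow> real \<Rightarrow> real \<Rightarrow> real \<Rightarrow> real" where
  "wD c k b f = c*k*exp(-k*(f/(1-f))+b) / ((1-f)^2*(1+exp(-k*(f/(1-f))+b))^2)"

lemma wfit_deriv:
  assumes "f \<noteq> 1"
  shows "(wfit c k b has_real_derivative wD c k b f) (at f)"
proof -
  have e: "wfit c k b = (\<lambda>f. c / (1 + exp (- k * (f / (1 - f)) + b)))" by (rule ext) (simp add: wfit_def)
  have ne: "1 - f \<noteq> 0" using assms by simp
  have pos: "1 + exp (- k * (f / (1 - f)) + b) \<noteq> 0" by (smt (verit) exp_gt_zero)
  show ?thesis unfolding e wD_def
    apply (rule derivative_eq_intros refl | rule DERIV_const | rule ne | rule pos)+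
    using ne pos apply (simp add: field_simps power2_eq_square)
    done
qed

lemma J11_eq: "f \<noteq> 1 \<Longrightarrow> J11 c k b \<nu> f = wD c k b f * (f - f^2) + wfit c k b f * (1 - 2*f) - \<nu>"
  unfolding J11_def using wfit_deriv DERIV_imp_deriv by metis

lemma g_deriv:
  assumes "f \<noteq> 1"
  shows "((\<lambda>f. wfit c k b f * (1 - f) * f - \<nu> * f) has_real_derivative J11 c k b \<nu> f) (at f)"
  unfolding J11_eq[OF assms]
  apply (rule derivative_eq_intros wfit_deriv[OF assms] refl)+
  apply (simp add: algebra_simps power2_eq_square)
  done

lemma J11_half: "J11 c k b \<nu> (1/2) = lambda1 c k b \<nu>"
  by (simp add: J11_eq wD_def wfit_def lambda1_def power2_eq_square field_simps)

lemma J11_cont: "isCont (\<lambda>f. wD c k b f * (f - f^2) + wfit c k b f * (1 - 2*f) - \<nu>) (1/2)"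
proof -
  have p: "\<And>x::real. 1 + exp x \<noteq> 0" by (smt (verit) exp_gt_zero)
  show ?thesis
  unfolding wD_def wfit_def
  apply (intro continuous_intros)
  apply (simp_all add: p)
  done
qed

lemma eig_parts:
  assumes "(complex_of_real A - z) * (complex_of_real B - z) - complex_of_real C = 0"
  shows "(A - Re z)*(B - Re z) - (Im z)^2 = C" "Im z * (A + B - 2*Re z) = 0"
proof -
  have "Re ((complex_of_real A - z) * (complex_of_real B - z) - complex_of_real C) = 0"
       "Im ((complex_of_real A - z) * (complex_of_real B - z) - complex_of_real C) = 0"
    using assms by simp_all
  then show "(A - Re z)*(B - Re z) - (Im z)^2 = C" "Im z * (A + B - 2*Re z) = 0"
    by (simp_all add: algebra_simps power2_eq_square)
qed

lemma stab:
  assumes "A + B < 0" "A*B - C > 0"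
    and "(complex_of_real A - z) * (complex_of_real B - z) - complex_of_real C = 0"
  shows "Re z < 0"
proof -
  note r = eig_parts(1)[OF assms(3)] and i = eig_parts(2)[OF assms(3)]
  show ?thesis
  proof (cases "Im z = 0")
    case True
    show ?thesis
    proof (rule ccontr)
      assume "\<not> Re z < 0"
      hence a: "Re z \<ge> 0" by simp
      have "Re z * (A + B) \<le> 0" using a assms(1) by (simp add: mult_nonneg_nonpos)
      moreover have "(A - Re z)*(B - Re z) = A*B - Re z * (A+B) + (Re z)^2" by (simp add: algebra_simps power2_eq_square)
      moreover have "(Re z)^2 \<ge> 0" by simp
      moreover have "(A - Re z)*(B - Re z) = C" using r True by simp
      ultimately show False using assms(2) by linarith
    qed
  next
    case False
    then have "A + B - 2 * Re z = 0" using i by simp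
    then show ?thesis using assms(1) by simp
  qed
qed

theorem theorem5:
  fixes c k b s \<nu> :: real
  assumes "c > 0" "k > 0" "b > 0" "s > 0" "\<nu> > 0"
    and "lambda1 c k b \<nu> < 0"
    and "hss c k b \<nu> > 0"
  shows "fixed_point c k b s \<nu> (hss c k b \<nu>) (1/2) 1
    \<and> (\<forall>\<epsilon>>0. \<exists>\<eta>>0. \<forall>h. \<bar>h - hss c k b \<nu>\<bar> < \<eta> \<longrightarrow>
          (\<exists>f. \<bar>f - 1/2\<bar> < \<epsilon> \<and> fixed_point c k b s \<nu> h f 1)
        \<and> (\<exists>x. \<bar>x - 1\<bar> < \<epsilon> \<and> fixed_point c k b s \<nu> h (1/2) x))
    \<and> (\<exists>\<delta>>0. \<forall>h f x.
          \<bar>h - hss c k b \<nu>\<bar> < \<delta> \<and> h \<noteq> hss c k b \<nu> \<and> \<bar>f - 1/2\<bar> < \<delta> \<and> \<bar>x - 1\<bar> < \<delta>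
          \<and> fixed_point c k b s \<nu> h f x \<longrightarrow>
            (x = 1 \<longrightarrow>
               (h < hss c k b \<nu> \<longrightarrow> stable_fp c k b s \<nu> h f x)
             \<and> (h > hss c k b \<nu> \<longrightarrow> unstable_fp c k b s \<nu> h f x))
          \<and> (f = 1/2 \<longrightarrow>
               (h < hss c k b \<nu> \<longrightarrow> unstable_fp c k b s \<nu> h f x)
             \<and> (h > hss c k b \<nu> \<longrightarrow> stable_fp c k b s \<nu> h f x)))"
proof -
  define H where "H = hss c k b \<nu>"
  define L where "L = lambda1 c k b \<nu>"
  define g where "g = (\<lambda>f. wfit c k b f * (1 - f) * f - \<nu> * f)"
  define J where "J = (\<lambda>f. wD c k b f * (f - f^2) + wfit c k b f * (1 - 2*f) - \<nu>)"
  have HP: "H > 0" and LN: "L < 0" using assms H_def L_def by auto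
  have ghalf: "g (1/2) = - H"
  proof -
    have e: "exp (b-k) > 0" by simp
    then have "1 + exp (b-k) \<noteq> 0" "4 + 4*exp(b-k) \<noteq> 0" "8 + exp(b-k)*8 \<noteq> 0" by linarith+
    then show ?thesis unfolding g_def H_def hss_def wfit_def by (simp add: field_simps)
  qed
  have fp1: "fixed_point c k b s \<nu> h f 1 \<longleftrightarrow> g f + h = 0" for h f
    unfolding fixed_point_def rhs_f_def rhs_x_def g_def by (simp add: algebra_simps)
  have fp2: "fixed_point c k b s \<nu> h (1/2) x \<longleftrightarrow> - H - h * (1 - 2*x) = 0" for h x
  proof -
    have gh: "wfit c k b (1/2) * (1 - 1/2) * (1/2) - \<nu> * (1/2) = - H" using ghalf g_def by simp
    have "rhs_f c k b \<nu> h (1/2) x = - H - h * (1 - 2*x)" using gh unfolding rhs_f_def by linarith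
    then show ?thesis by (simp add: fixed_point_def rhs_x_def)
  qed
  have gder: "f \<noteq> 1 \<Longrightarrow> (g has_real_derivative J11 c k b \<nu> f) (at f)" for f
    unfolding g_def by (rule g_deriv)
  have JJ: "f \<noteq> 1 \<Longrightarrow> J11 c k b \<nu> f = J f" for f unfolding J_def by (rule J11_eq)
  have Jhalf: "J (1/2) = L" using J11_half JJ[of "1/2"] L_def by simp
  have "(J \<longlongrightarrow> J (1/2)) (at (1/2))" using J11_cont[of c k b \<nu>] unfolding J_def isCont_def by simp
  then have "eventually (\<lambda>f. J f < 0) (at (1/2))" using order_tendstoD(2)[of J "J (1/2)" _ 0] Jhalf LN by auto
  then obtain d1 where d1: "d1 > 0" "\<And>f. f \<noteq> 1/2 \<Longrightarrow> dist f (1/2) < d1 \<Longrightarrow> J f < 0"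
    unfolding eventually_at by auto
  define d0 where "d0 = min d1 (1/4)"
  have d0: "d0 > 0" "d0 \<le> 1/4" using d1 d0_def by auto
  have Jneg: "\<bar>f - 1/2\<bar> < d0 \<Longrightarrow> J f < 0" for f
  proof (cases "f = 1/2")
    case True then show ?thesis using Jhalf LN by (simp only: True)
  next
    case False
    assume "\<bar>f - 1/2\<bar> < d0"
    then show ?thesis using d1(2)[OF False] d0_def by (simp add: dist_real_def)
  qed
  have J11neg: "\<bar>f - 1/2\<bar> < d0 \<Longrightarrow> J11 c k b \<nu> f < 0" for f
    using Jneg[of f] JJ[of f] d0 by auto
  have dec: "g b' < g a" if "1/2 - d0 < a" "a < b'" "b' < 1/2 + d0" for a b'
  proof (rule DERIV_neg_imp_decreasing[OF that(2)])
    fix t assume "a \<le> t" "t \<le> b'"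
    then have t: "\<bar>t - 1/2\<bar> < d0" using that by auto
    then have "t \<noteq> 1" using d0 by auto
    then show "\<exists>y. (g has_real_derivative y) (at t) \<and> y < 0" using gder J11neg[OF t] by blast
  qed
  have gcont: "\<bar>t - 1/2\<bar> < d0 \<Longrightarrow> isCont g t" for t
  proof -
    assume "\<bar>t - 1/2\<bar> < d0"
    then have "t \<noteq> 1" using d0 by auto
    then show ?thesis by (rule DERIV_isCont[OF gder])
  qed
  have P1: "fixed_point c k b s \<nu> H (1/2) 1" using fp1 ghalf by simp
  have P2: "\<exists>\<eta>>0. \<forall>h. \<bar>h - H\<bar> < \<eta> \<longrightarrow>
          (\<exists>f. \<bar>f - 1/2\<bar> < \<epsilon> \<and> fixed_point c k b s \<nu> h f 1)
        \<and> (\<exists>x. \<bar>x - 1\<bar> < \<epsilon> \<and> fixed_point c k b s \<nu> h (1/2) x)" if ep: "\<epsilon> > 0" for \<epsilon>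
  proof -
    define e where "e = min \<epsilon> d0 / 2"
    have e: "e > 0" "e < \<epsilon>" "e < d0" using ep d0 e_def by auto
    have g1: "g (1/2 - e) > - H" using dec[of "1/2 - e" "1/2"] e ghalf by auto
    have g2: "g (1/2 + e) < - H" using dec[of "1/2" "1/2 + e"] e ghalf by auto
    define \<eta> where "\<eta> = min (min (g (1/2 - e) + H) (- H - g (1/2 + e))) (min (H/2) (\<epsilon>*H))"
    have \<eta>: "\<eta> > 0" using g1 g2 HP ep \<eta>_def by auto
    show ?thesis
    proof (rule exI[of _ \<eta>], intro conjI[OF \<eta>] allI impI)
      fix h assume h: "\<bar>h - H\<bar> < \<eta>"
      have "g (1/2 + e) \<le> - h" "- h \<le> g (1/2 - e)" using h \<eta>_def by auto
      moreover have "\<forall>t. 1/2 - e \<le> t \<and> t \<le> 1/2 + e \<longrightarrow> isCont g t" using gcont e by auto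
      ultimately obtain f where f: "1/2 - e \<le> f" "f \<le> 1/2 + e" "g f = - h"
        using IVT2[of g "1/2 + e" "-h" "1/2 - e"] e by auto
      have F: "\<exists>f. \<bar>f - 1/2\<bar> < \<epsilon> \<and> fixed_point c k b s \<nu> h f 1"
      proof (intro exI[of _ f] conjI)
        show "\<bar>f - 1/2\<bar> < \<epsilon>" using f e by auto
        show "fixed_point c k b s \<nu> h f 1" using f fp1 by simp
      qed
      have "\<bar>h - H\<bar> < H/2" using h \<eta>_def by auto
      then have hp: "h > H/2" by arith
      then have h0: "h > 0" "h \<noteq> 0" using HP by auto
      define x where "x = (1 + H/h)/2"
      have "x - 1 = (H - h) / (2*h)" unfolding x_def using h0 by (simp add: field_simps)
      then have xa: "\<bar>x - 1\<bar> = \<bar>H - h\<bar> / (2*h)" using h0 by (simp add: abs_divide)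
      have "\<bar>H - h\<bar> < \<epsilon> * H" using h \<eta>_def by auto
      also have "\<dots> < \<epsilon> * (2*h)" using hp ep by simp
      finally have "\<bar>H - h\<bar> / (2*h) < \<epsilon>" using h0 by (simp add: divide_less_eq)
      then have x1: "\<bar>x - 1\<bar> < \<epsilon>" using xa by simp
      have "h * (1 - 2*x) = - H" unfolding x_def using h0 by (simp add: field_simps)
      then have "- H - h * (1 - 2*x) = 0" by simp
      then have X: "\<exists>x. \<bar>x - 1\<bar> < \<epsilon> \<and> fixed_point c k b s \<nu> h (1/2) x"
        using fp2 x1 by blast
      show "(\<exists>f. \<bar>f - 1/2\<bar> < \<epsilon> \<and> fixed_point c k b s \<nu> h f 1)
        \<and> (\<exists>x. \<bar>x - 1\<bar> < \<epsilon> \<and> fixed_point c k b s \<nu> h (1/2) x)" using F X by blast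
    qed
  qed
  define \<delta> where "\<delta> = min (d0/2) (min (1/2) (H/2))"
  have \<delta>: "\<delta> > 0" using d0 HP \<delta>_def by auto
  have P3: "\<forall>h f x.
          \<bar>h - H\<bar> < \<delta> \<and> h \<noteq> H \<and> \<bar>f - 1/2\<bar> < \<delta> \<and> \<bar>x - 1\<bar> < \<delta>
          \<and> fixed_point c k b s \<nu> h f x \<longrightarrow>
            (x = 1 \<longrightarrow>
               (h < H \<longrightarrow> stable_fp c k b s \<nu> h f x)
             \<and> (h > H \<longrightarrow> unstable_fp c k b s \<nu> h f x))
          \<and> (f = 1/2 \<longrightarrow>
               (h < H \<longrightarrow> unstable_fp c k b s \<nu> h f x)
             \<and> (h > H \<longrightarrow> stable_fp c k b s \<nu> h f x))"
  proof (intro allI impI)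
    fix h f x
    assume A: "\<bar>h - H\<bar> < \<delta> \<and> h \<noteq> H \<and> \<bar>f - 1/2\<bar> < \<delta> \<and> \<bar>x - 1\<bar> < \<delta> \<and> fixed_point c k b s \<nu> h f x"
    have Ad: "\<bar>h - H\<bar> < \<delta>" "\<bar>f - 1/2\<bar> < \<delta>" "\<bar>x - 1\<bar> < \<delta>" using A by auto
    have Dd: "\<delta> \<le> d0/2" "\<delta> \<le> 1/2" "\<delta> \<le> H/2" by (simp_all add: \<delta>_def)
    have fd: "\<bar>f - 1/2\<bar> < d0" using Ad Dd d0 by arith
    have hp: "h > 0" using Ad Dd HP by arith
    have xp: "x > 1/2" using Ad Dd by arith
    have eig: "jac_eigenvalue c k b s \<nu> h f x z \<longleftrightarrow>
       (complex_of_real (J11 c k b \<nu> f) - z) * (complex_of_real (J22 s f x) - z)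
       - complex_of_real (J12 h * J21 s x) = 0" for z
      unfolding jac_eigenvalue_def by simp
    show "(x = 1 \<longrightarrow> (h < H \<longrightarrow> stable_fp c k b s \<nu> h f x) \<and> (h > H \<longrightarrow> unstable_fp c k b s \<nu> h f x))
          \<and> (f = 1/2 \<longrightarrow> (h < H \<longrightarrow> unstable_fp c k b s \<nu> h f x) \<and> (h > H \<longrightarrow> stable_fp c k b s \<nu> h f x))"
    proof (intro conjI impI)
      assume x1: "x = 1"
      have gf: "g f = - h" using A x1 fp1 by auto
      have C0: "J12 h * J21 s x = 0" using x1 by (simp add: J21_def)
      have B: "J22 s f x = s * (2*f - 1)" using x1 by (simp add: J22_def algebra_simps)
      have Aneg: "J11 c k b \<nu> f < 0" using J11neg[OF fd] .
      {
        assume hl: "h < H"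
        have "f < 1/2"
        proof (rule ccontr)
          assume "\<not> f < 1/2"
          then consider "f = 1/2" | "f > 1/2" by linarith
          then show False
          proof cases
            case 1 then have "g (1/2) = - h" using gf by (simp only: 1)
            then show False using ghalf hl by simp
          next
            case 2 then have "g f < g (1/2)" using dec[of "1/2" f] fd by auto
            then show False using gf ghalf hl by simp
          qed
        qed
        then have Bn: "J22 s f x < 0" using B assms(4) by (simp add: mult_pos_neg)
        show "stable_fp c k b s \<nu> h f x" unfolding stable_fp_def
        proof (intro allI impI)
          fix z assume "jac_eigenvalue c k b s \<nu> h f x z"
          then show "Re z < 0" using eig stab[of "J11 c k b \<nu> f" "J22 s f x" "J12 h * J21 s x" z] C0 Aneg Bn
            by (simp add: mult_neg_neg)
        qed
      }
      {
        assume hg: "h > H"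
        have "f > 1/2"
        proof (rule ccontr)
          assume "\<not> f > 1/2"
          then consider "f = 1/2" | "f < 1/2" by linarith
          then show False
          proof cases
            case 1 then have "g (1/2) = - h" using gf by (simp only: 1)
            then show False using ghalf hg by simp
          next
            case 2 then have "g (1/2) < g f" using dec[of f "1/2"] fd by auto
            then show False using gf ghalf hg by simp
          qed
        qed
        then have Bp: "J22 s f x > 0" using B assms(4) by simp
        show "unstable_fp c k b s \<nu> h f x" unfolding unstable_fp_def
          using eig[of "complex_of_real (J22 s f x)"] C0 Bp by (intro exI[of _ "complex_of_real (J22 s f x)"]) simp
      }
    next
      assume fh: "f = 1/2"
      have fx: "h * (2*x - 1) = H" using A fp2 unfolding fh by (simp add: algebra_simps)
      have A11: "J11 c k b \<nu> f = L" unfolding fh using J11_half L_def by simp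
      have B0: "J22 s f x = 0" unfolding fh by (simp add: J22_def)
      define q where "q = 4 * h * s * x * (1 - x)"
      have C: "J12 h * J21 s x = - q" unfolding q_def J12_def J21_def by (simp add: algebra_simps)
      {
        assume hl: "h < H"
        have "x > 1"
        proof (rule ccontr)
          assume "\<not> x > 1"
          then have "h * (2*x - 1) \<le> h * 1" using hp by (intro mult_left_mono) auto
          then show False using fx hl by simp
        qed
        then have qn: "q < 0" unfolding q_def using hp assms(4) xp
          by (simp add: mult_pos_neg)
        define r where "r = sqrt (L^2 - 4*q)"
        have nn: "L^2 - 4*q \<ge> 0" using qn zero_le_power2[of L] by linarith
        have r2: "r^2 = L^2 - 4*q" unfolding r_def using real_sqrt_pow2[OF nn] .
        have "sqrt (L^2) < r" unfolding r_def using qn by (intro real_sqrt_less_mono) simp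
        then have rL: "r > - L" by simp
        define w where "w = (L + r)/2"
        have wp: "w > 0" using rL w_def by simp
        have weq: "(L - w) * (0 - w) - (- q) = 0"
          unfolding w_def using r2 by (simp add: field_simps power2_eq_square)
        have "(complex_of_real L - complex_of_real w) * (complex_of_real 0 - complex_of_real w) - complex_of_real (- q) = 0"
          using arg_cong[OF weq, of complex_of_real] by simp
        then show "unstable_fp c k b s \<nu> h f x" unfolding unstable_fp_def
          using eig[of "complex_of_real w"] A11 B0 C wp by (intro exI[of _ "complex_of_real w"]) simp
      }
      {
        assume hg: "h > H"
        have "x < 1"
        proof (rule ccontr)
          assume "\<not> x < 1"
          then have "h * (2*x - 1) \<ge> h * 1" using hp by (intro mult_left_mono) auto
          then show False using fx hg by simp
        qed
        then have qp: "q > 0" unfolding q_def using hp assms(4) xp by simp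
        show "stable_fp c k b s \<nu> h f x" unfolding stable_fp_def
        proof (intro allI impI)
          fix z assume "jac_eigenvalue c k b s \<nu> h f x z"
          then show "Re z < 0" using eig stab[of L 0 "- q" z] A11 B0 C LN qp by simp
        qed
      }
    qed
  qed
  have P2': "\<forall>\<epsilon>>0. \<exists>\<eta>>0. \<forall>h. \<bar>h - H\<bar> < \<eta> \<longrightarrow>
          (\<exists>f. \<bar>f - 1/2\<bar> < \<epsilon> \<and> fixed_point c k b s \<nu> h f 1)
        \<and> (\<exists>x. \<bar>x - 1\<bar> < \<epsilon> \<and> fixed_point c k b s \<nu> h (1/2) x)"
  proof (intro allI impI)
    fix \<epsilon> :: real assume "\<epsilon> > 0"
    then show "\<exists>\<eta>>0. \<forall>h. \<bar>h - H\<bar> < \<eta> \<longrightarrow>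
          (\<exists>f. \<bar>f - 1/2\<bar> < \<epsilon> \<and> fixed_point c k b s \<nu> h f 1)
        \<and> (\<exists>x. \<bar>x - 1\<bar> < \<epsilon> \<and> fixed_point c k b s \<nu> h (1/2) x)" by (rule P2)
  qed
  show ?thesis unfolding H_def[symmetric]
    apply (intro conjI)
      apply (rule P1)
     apply (rule P2')
    apply (rule exI[of _ \<delta>])
    by (rule conjI[OF \<delta> P3])
qed

end
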